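(* Let $\mathfrak{S}\subset\mathbb{R}^D$ be a state space, $\mathfrak{A}$ an action space, $\mathfrak{Z}\coloneqq\mathfrak{S}\times\mathfrak{A}$, and let $\mathcal{H}$ be a reproducing kernel Hilbert space of real-valued functions on $\mathfrak{Z}$ with reproducing kernel $\kappa$ and feature map $\varphi(\mathbf{z})\coloneqq\kappa(\mathbf{z},\cdot)$. Let $\mathcal{M}$ be the set of all maps $\mu\colon\mathfrak{S}\to\mathfrak{A}$. Fix $g\in\mathcal{H}$, a discount factor $\alpha\ge 0$, an integer $N_{\mathrm{av}}\ge 1$, states $\mathbf{s}^{\mathrm{av}}_1,\ldots,\mathbf{s}^{\mathrm{av}}_{N_{\mathrm{av}}}\in\mathfrak{S}$ and functions $\psi_1,\ldots,\psi_{N_{\mathrm{av}}}\in\mathcal{H}$. Define, for every $\mu\in\mathcal{M}$ and $Q\in\mathcal{H}$, $$T_\mu(Q)\coloneqq g+\alpha\sum_{i=1}^{N_{\mathrm{av}}}Q\big(\mathbf{s}^{\mathrm{av}}_i,\mu(\mathbf{s}^{\mathrm{av}}_i)\big)\,\psi_i,\qquad T(Q)\coloneqq g+\alpha\sum_{i=1}^{N_{\mathrm{av}}}\Big(\inf_{a\in\mathfrak{A}}Q(\mathbf{s}^{\mathrm{av}}_i,a)\Big)\,\psi_i ,$$ where all the infima are assumed finite. Let $\mathbf{K}_\Psi$ be the $N_{\mathrm{av}}\times N_{\mathrm{av}}$ matrix with entries $\langle\psi_i,\psi_j\rangle_{\mathcal{H}}$, and for $\mu'\in\mathcal{M}$ let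 $\mathbf{K}^{\mathrm{av}}_{\mu'}$ be the $N_{\mathrm{av}}\times N_{\mathrm{av}}$ matrix with entries $\kappa\big((\mathbf{s}^{\mathrm{av}}_i,\mu'(\mathbf{s}^{\mathrm{av}}_i)),(\mathbf{s}^{\mathrm{av}}_j,\mu'(\mathbf{s}^{\mathrm{av}}_j))\big)$. Set $$\beta\coloneqq\alpha\Big(\|\mathbf{K}_\Psi\|_2\,\sup_{\mu'\in\mathcal{M}}\|\mathbf{K}^{\mathrm{av}}_{\mu'}\|_2\Big)^{1/2},$$ with $\|\cdot\|_2$ the spectral norm. Then for all $Q_1,Q_2\in\mathcal{H}$ and all $\mu\in\mathcal{M}$, $$\|T_\mu(Q_1)-T_\mu(Q_2)\|_{\mathcal{H}}\le\beta\|Q_1-Q_2\|_{\mathcal{H}},\qquad \|T(Q_1)-T(Q_2)\|_{\mathcal{H}}\le\beta\|Q_1-Q_2\|_{\mathcal{H}}.$$ In particular, if $\beta=1$ both maps are nonexpansive, and if $\beta<1$ both are contractions on $\mathcal{H}$.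
   Context: $Q(\mathbf{z})$ denotes evaluation of $Q\in\mathcal{H}$ at $\mathbf{z}\in\mathfrak{Z}$; by the reproducing property $Q(\mathbf{z})=\langle Q,\varphi(\mathbf{z})\rangle_{\mathcal{H}}$. *)

theory Defs
  imports "HOL-Analysis.Analysis"
begin

text \<open>An RKHS of real-valued functions on the type 'z: elements of the Hilbert space 'h
  are identified with functions via the injective evaluation map ev; kappa is the
  reproducing kernel and phi the feature map phi z = kappa(z, .).\<close>
definition is_rkhs ::
  "('h::{real_inner,complete_space} \<Rightarrow> 'z \<Rightarrow> real) \<Rightarrow> ('z \<Rightarrow> 'z \<Rightarrow> real) \<Rightarrow> ('z \<Rightarrow> 'h) \<Rightarrow> bool" where
  "is_rkhs ev kappa phi \<longleftrightarrow>
     inj ev \<and> (\<forall>z. ev (phi z) = kappa z) \<and> (\<forall>Q z. ev Q z = inner Q (phi z))"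

definition spectral_norm :: "real^'n^'n \<Rightarrow> real" where
  "spectral_norm A = onorm (\<lambda>x. A *v x)"

definition T_mu ::
  "('h::real_vector \<Rightarrow> ('s \<times> 'a) \<Rightarrow> real) \<Rightarrow> 'h \<Rightarrow> real \<Rightarrow> ('n::finite \<Rightarrow> 's) \<Rightarrow> ('n \<Rightarrow> 'h)
     \<Rightarrow> ('s \<Rightarrow> 'a) \<Rightarrow> 'h \<Rightarrow> 'h" where
  "T_mu ev g \<alpha> s \<psi> \<mu> Q = g + \<alpha> *\<^sub>R (\<Sum>i\<in>UNIV. ev Q (s i, \<mu> (s i)) *\<^sub>R \<psi> i)"

definition T_opt ::
  "('h::real_vector \<Rightarrow> ('s \<times> 'a) \<Rightarrow> real) \<Rightarrow> 'h \<Rightarrow> real \<Rightarrow> ('n::finite \<Rightarrow> 's) \<Rightarrow> ('n \<Rightarrow> 'h)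
     \<Rightarrow> 'h \<Rightarrow> 'h" where
  "T_opt ev g \<alpha> s \<psi> Q = g + \<alpha> *\<^sub>R (\<Sum>i\<in>UNIV. Inf (range (\<lambda>a. ev Q (s i, a))) *\<^sub>R \<psi> i)"

definition K_Psi :: "('n::finite \<Rightarrow> 'h::real_inner) \<Rightarrow> real^'n^'n" where
  "K_Psi \<psi> = (\<chi> i j. inner (\<psi> i) (\<psi> j))"

definition K_av :: "(('s \<times> 'a) \<Rightarrow> ('s \<times> 'a) \<Rightarrow> real) \<Rightarrow> ('n::finite \<Rightarrow> 's) \<Rightarrow> ('s \<Rightarrow> 'a) \<Rightarrow> real^'n^'n" where
  "K_av kappa s \<mu> = (\<chi> i j. kappa (s i, \<mu> (s i)) (s j, \<mu> (s j)))"

definition beta_const ::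
  "real \<Rightarrow> (('s \<times> 'a) \<Rightarrow> ('s \<times> 'a) \<Rightarrow> real) \<Rightarrow> ('n::finite \<Rightarrow> 's) \<Rightarrow> ('n \<Rightarrow> 'h::real_inner) \<Rightarrow> real" where
  "beta_const \<alpha> kappa s \<psi> =
     \<alpha> * sqrt (spectral_norm (K_Psi \<psi>) * (SUP \<mu>. spectral_norm (K_av kappa s \<mu>)))"

end

theory Submission
  imports Defs
begin

lemma sn_nonneg: "spectral_norm A \<ge> 0"
  unfolding spectral_norm_def by (rule onorm_pos_le) simp

lemma psi_bound:
  fixes \<psi> :: "'n::finite \<Rightarrow> 'h::real_inner" and c :: "real^'n"
  shows "norm (\<Sum>i\<in>UNIV. c$i *\<^sub>R \<psi> i) \<le> sqrt (spectral_norm (K_Psi \<psi>)) * norm c"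
proof -
  let ?v = "\<Sum>i\<in>UNIV. c$i *\<^sub>R \<psi> i"
  let ?K = "K_Psi \<psi>"
  have "norm ?v ^ 2 = inner ?v ?v" by (simp add: power2_norm_eq_inner)
  also have "\<dots> = inner c (?K *v c)"
    by (simp add: inner_sum_left inner_sum_right inner_vec_def matrix_vector_mult_def K_Psi_def
        sum_distrib_left mult.assoc mult.left_commute)
      (intro sum.cong refl, simp add: inner_commute)
  also have "\<dots> \<le> norm c * norm (?K *v c)" by (rule norm_cauchy_schwarz)
  also have "\<dots> \<le> norm c * (spectral_norm ?K * norm c)"
    unfolding spectral_norm_def
    by (rule mult_left_mono[OF onorm[OF matrix_vector_mul_bounded_linear]]) simp
  finally have "norm ?v ^ 2 \<le> spectral_norm ?K * norm c ^ 2" by (simp add: power2_eq_square algebra_simps)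
  hence "norm ?v \<le> sqrt (spectral_norm ?K * norm c ^ 2)" by (rule real_le_rsqrt)
  thus ?thesis by (simp add: real_sqrt_mult)
qed

lemma kav_eq:
  assumes rkhs: "is_rkhs ev kappa phi"
  shows "K_av kappa s \<mu> = K_Psi (\<lambda>i. phi (s i, \<mu> (s i)))"
proof -
  have "kappa z w = inner (phi z) (phi w)" for z w
    using rkhs unfolding is_rkhs_def by metis
  thus ?thesis by (simp add: K_av_def K_Psi_def)
qed

lemma phi_bound:
  assumes rkhs: "is_rkhs ev kappa phi"
  shows "norm (\<chi> i. inner Q (phi (s i, \<mu> (s i)))) \<le> sqrt (spectral_norm (K_av kappa s \<mu>)) * norm Q"
proof -
  let ?z = "\<lambda>i. (s i, \<mu> (s i))"
  let ?d = "\<chi> i. inner Q (phi (?z i))"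
  let ?S = "sqrt (spectral_norm (K_av kappa s \<mu>))"
  have "norm ?d ^ 2 = inner Q (\<Sum>i\<in>UNIV. ?d$i *\<^sub>R phi (?z i))"
    by (simp add: inner_sum_right power2_norm_eq_inner inner_vec_def)
  also have "\<dots> \<le> norm Q * norm (\<Sum>i\<in>UNIV. ?d$i *\<^sub>R phi (?z i))"
    by (rule norm_cauchy_schwarz)
  also have "\<dots> \<le> norm Q * (?S * norm ?d)"
    using psi_bound[of ?d "\<lambda>i. phi (?z i)"] kav_eq[OF rkhs, of s \<mu>]
    by (intro mult_left_mono) auto
  finally have *: "norm ?d * norm ?d \<le> norm ?d * (?S * norm Q)"
    by (simp add: power2_eq_square algebra_simps)
  show ?thesis
  proof (cases "norm ?d = 0")
    case True thus ?thesis using sn_nonneg[of "K_av kappa s \<mu>"] by simp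
  next
    case False
    hence "norm ?d > 0" by simp
    with * show ?thesis by (simp add: mult_le_cancel_left)
  qed
qed

lemma inf_approx:
  fixes f g :: "'a \<Rightarrow> real"
  assumes "bdd_below (range f)" "bdd_below (range g)" "\<epsilon> > 0"
  shows "\<exists>a. \<bar>Inf (range f) - Inf (range g)\<bar> \<le> \<bar>f a - g a\<bar> + \<epsilon>"
proof (cases "Inf (range f) \<ge> Inf (range g)")
  case True
  obtain a where a: "g a < Inf (range g) + \<epsilon>"
    using cInf_lessD[of "range g" "Inf (range g) + \<epsilon>"] assms(3) by auto
  have "Inf (range f) \<le> f a" using assms(1) by (simp add: cInf_lower)
  with a True show ?thesis by (intro exI[of _ a]) linarith
next
  case False
  obtain a where a: "f a < Inf (range f) + \<epsilon>"
    using cInf_lessD[of "range f" "Inf (range f) + \<epsilon>"] assms(3) by auto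
  have "Inf (range g) \<le> g a" using assms(2) by (simp add: cInf_lower)
  with a False show ?thesis by (intro exI[of _ a]) linarith
qed

theorem theorem1:
  fixes ev :: "'h::{real_inner,complete_space} \<Rightarrow> ('s \<times> 'a) \<Rightarrow> real"
    and kappa :: "('s \<times> 'a) \<Rightarrow> ('s \<times> 'a) \<Rightarrow> real"
    and phi :: "('s \<times> 'a) \<Rightarrow> 'h"
    and g :: 'h and \<alpha> :: real
    and s :: "'n::finite \<Rightarrow> 's" and \<psi> :: "'n \<Rightarrow> 'h"
  assumes rkhs: "is_rkhs ev kappa phi"
    and alpha_nonneg: "\<alpha> \<ge> 0"
    and inf_finite: "\<And>Q i. bdd_below (range (\<lambda>a. ev Q (s i, a)))"
    and sup_finite: "bdd_above (range (\<lambda>\<mu>. spectral_norm (K_av kappa s \<mu>)))"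
  shows "\<forall>Q1 Q2 \<mu>.
           norm (T_mu ev g \<alpha> s \<psi> \<mu> Q1 - T_mu ev g \<alpha> s \<psi> \<mu> Q2)
             \<le> beta_const \<alpha> kappa s \<psi> * norm (Q1 - Q2)
         \<and> norm (T_opt ev g \<alpha> s \<psi> Q1 - T_opt ev g \<alpha> s \<psi> Q2)
             \<le> beta_const \<alpha> kappa s \<psi> * norm (Q1 - Q2)"
proof (intro allI conjI)
  fix Q1 Q2 :: 'h and \<mu> :: "'s \<Rightarrow> 'a"
  define Q where "Q = Q1 - Q2"
  define S where "S = (SUP \<mu>. spectral_norm (K_av kappa s \<mu>))"
  define P where "P = spectral_norm (K_Psi \<psi>)"
  have evQ: "ev Q1 z - ev Q2 z = inner Q (phi z)" for z
    using rkhs unfolding is_rkhs_def Q_def by (metis inner_diff_left)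
  have KS: "spectral_norm (K_av kappa s \<mu>') \<le> S" for \<mu>'
    unfolding S_def by (rule cSUP_upper[OF _ sup_finite]) simp
  have P0: "P \<ge> 0" unfolding P_def by (rule sn_nonneg)
  have S0: "S \<ge> 0" using KS[of \<mu>] sn_nonneg[of "K_av kappa s \<mu>"] by linarith
  have beta: "beta_const \<alpha> kappa s \<psi> = \<alpha> * sqrt P * sqrt S"
    by (simp add: beta_const_def P_def S_def real_sqrt_mult)
  have fin: "norm (\<alpha> *\<^sub>R (\<Sum>i\<in>UNIV. c$i *\<^sub>R \<psi> i)) \<le> beta_const \<alpha> kappa s \<psi> * norm Q"
    if c: "norm c \<le> sqrt S * norm Q" for c :: "real^'n"
  proof -
    have "norm (\<alpha> *\<^sub>R (\<Sum>i\<in>UNIV. c$i *\<^sub>R \<psi> i)) = \<alpha> * norm (\<Sum>i\<in>UNIV. c$i *\<^sub>R \<psi> i)"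
      using alpha_nonneg by simp
    also have "\<dots> \<le> \<alpha> * (sqrt P * norm c)"
      using psi_bound[of c \<psi>] alpha_nonneg unfolding P_def by (intro mult_left_mono) auto
    also have "\<dots> \<le> \<alpha> * (sqrt P * (sqrt S * norm Q))"
      using c alpha_nonneg P0 by (intro mult_left_mono) auto
    finally show ?thesis by (simp add: beta mult.assoc)
  qed
  let ?d = "\<lambda>\<mu>. \<chi> i. inner Q (phi (s i, \<mu> (s i)))"
  have dbound: "norm (?d \<mu>') \<le> sqrt S * norm Q" for \<mu>'
  proof -
    have "norm (?d \<mu>') \<le> sqrt (spectral_norm (K_av kappa s \<mu>')) * norm Q"
      by (rule phi_bound[OF rkhs])
    also have "\<dots> \<le> sqrt S * norm Q"
      using KS[of \<mu>'] by (intro mult_right_mono) auto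
    finally show ?thesis .
  qed
  have "T_mu ev g \<alpha> s \<psi> \<mu> Q1 - T_mu ev g \<alpha> s \<psi> \<mu> Q2
        = \<alpha> *\<^sub>R (\<Sum>i\<in>UNIV. (?d \<mu>)$i *\<^sub>R \<psi> i)"
    by (simp add: T_mu_def evQ[symmetric] scaleR_left_diff_distrib sum_subtractf
        scaleR_right_diff_distrib)
  thus "norm (T_mu ev g \<alpha> s \<psi> \<mu> Q1 - T_mu ev g \<alpha> s \<psi> \<mu> Q2)
             \<le> beta_const \<alpha> kappa s \<psi> * norm (Q1 - Q2)"
    using fin[OF dbound[of \<mu>]] by (simp add: Q_def)
  define c where "c = (\<chi> i. Inf (range (\<lambda>a. ev Q1 (s i, a))) - Inf (range (\<lambda>a. ev Q2 (s i, a))))"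
  have "T_opt ev g \<alpha> s \<psi> Q1 - T_opt ev g \<alpha> s \<psi> Q2 = \<alpha> *\<^sub>R (\<Sum>i\<in>UNIV. c$i *\<^sub>R \<psi> i)"
    by (simp add: T_opt_def c_def scaleR_left_diff_distrib sum_subtractf
        scaleR_right_diff_distrib)
  moreover have "norm c \<le> sqrt S * norm Q"
  proof (rule field_le_epsilon)
    fix e :: real assume e: "e > 0"
    define C where "C = norm (\<chi> i::'n. (1::real))"
    have C0: "C \<ge> 0" unfolding C_def by simp
    define \<epsilon> where "\<epsilon> = e / (C + 1)"
    have eps: "\<epsilon> > 0" using e C0 by (simp add: \<epsilon>_def)
    have epsC: "\<epsilon> * C \<le> e"
      using e C0 by (simp add: \<epsilon>_def field_simps)
    define Pr where "Pr = (\<lambda>x a. \<bar>Inf (range (\<lambda>a. ev Q1 (x, a))) - Inf (range (\<lambda>a. ev Q2 (x, a)))\<bar>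
        \<le> \<bar>ev Q1 (x, a) - ev Q2 (x, a)\<bar> + \<epsilon>)"
    define \<mu>' where "\<mu>' = (\<lambda>x. SOME a. Pr x a)"
    have ci: "\<bar>c$i\<bar> \<le> \<bar>(?d \<mu>')$i\<bar> + \<epsilon>" for i
    proof -
      have "\<exists>a. Pr (s i) a" unfolding Pr_def
        by (rule inf_approx[OF inf_finite inf_finite eps])
      hence "Pr (s i) (\<mu>' (s i))" unfolding \<mu>'_def by (rule someI_ex)
      thus ?thesis by (simp add: Pr_def c_def evQ)
    qed
    have "norm c \<le> norm ((\<chi> i. \<bar>(?d \<mu>')$i\<bar>) + \<epsilon> *\<^sub>R (\<chi> i::'n. (1::real)))"
      by (rule norm_le_componentwise_cart) (use ci eps in \<open>auto\<close>)
    also have "\<dots> \<le> norm (\<chi> i. \<bar>(?d \<mu>')$i\<bar>) + \<epsilon> * C"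
      by (rule order_trans[OF norm_triangle_ineq]) (use eps in \<open>simp add: C_def\<close>)
    also have "norm (\<chi> i. \<bar>(?d \<mu>')$i\<bar>) \<le> norm (?d \<mu>')"
      by (rule norm_le_componentwise_cart) simp
    finally show "norm c \<le> sqrt S * norm Q + e"
      using dbound[of \<mu>'] epsC by linarith
  qed
  ultimately show "norm (T_opt ev g \<alpha> s \<psi> Q1 - T_opt ev g \<alpha> s \<psi> Q2)
             \<le> beta_const \<alpha> kappa s \<psi> * norm (Q1 - Q2)"
    using fin by (simp add: Q_def)
qed

end
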